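(* Let $h\geq 3$ and $v\equiv 0\pmod{2h}$. If there exists a $(K_2,S(C_h))$-URD$(v;r,s)$, then $(r,s)\in J(v)$, where $J(v)=\{(3+4x,\ \frac{v-4}{2}-2x) : x=0,1,\ldots,\frac{v-4}{4}\}$ if $v\equiv 0\pmod{4h}$, or if $v\equiv 2h\pmod{4h}$ and $h$ is even; and $J(v)=\{(1+4x,\ \frac{v-2}{2}-2x) : x=0,1,\ldots,\frac{v-2}{4}\}$ if $v\equiv 2h\pmod{4h}$ and $h$ is odd.
   Context: For $h\geq 3$, an $h$-sun is the graph on $2h$ distinct vertices $a_1,\ldots,a_h,b_1,\ldots,b_h$ consisting of the $h$-cycle $(a_1,a_2,\ldots,a_h)$ together with the edges $\{a_i,b_i\}$, $i=1,\ldots,h$. A $(K_2,S(C_h))$-URD$(v;r,s)$ is a partition of the edge set of the complete graph $K_v$ into $r$ classes each of which is a 1-factor (perfect matching) of $K_v$, and $s$ classes each of which is a set of vertex-disjoint $h$-suns covering every vertex of $K_v$ exactly once. *)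

theory Defs
  imports Main
begin

definition Kv_edges :: "nat \<Rightarrow> nat set set" where
  "Kv_edges v = {{x, y} | x y. x < v \<and> y < v \<and> x \<noteq> y}"

definition one_factor :: "nat \<Rightarrow> nat set set \<Rightarrow> bool" where
  "one_factor v M \<longleftrightarrow> M \<subseteq> Kv_edges v \<and> (\<forall>x<v. \<exists>!e. e \<in> M \<and> x \<in> e)"

definition sun_edges :: "nat \<Rightarrow> (nat \<Rightarrow> nat) \<Rightarrow> (nat \<Rightarrow> nat) \<Rightarrow> nat set set" where
  "sun_edges h a b = {{a i, a (Suc i mod h)} | i. i < h} \<union> {{a i, b i} | i. i < h}"

definition is_sun :: "nat \<Rightarrow> nat set set \<Rightarrow> bool" where
  "is_sun h G \<longleftrightarrow> (\<exists>a b. inj_on a {..<h} \<and> inj_on b {..<h} \<and>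
       a ` {..<h} \<inter> b ` {..<h} = {} \<and> G = sun_edges h a b)"

text \<open>A class of vertex-disjoint h-suns covering every vertex of K_v exactly once
  (as a set of edges: the union of the suns' edge sets). The vertex set of a sun G is \<Union>G.\<close>
definition sun_class :: "nat \<Rightarrow> nat \<Rightarrow> nat set set \<Rightarrow> bool" where
  "sun_class h v E \<longleftrightarrow> (\<exists>\<C>. (\<forall>G\<in>\<C>. is_sun h G) \<and>
       (\<forall>G\<in>\<C>. \<forall>G'\<in>\<C>. G \<noteq> G' \<longrightarrow> \<Union>G \<inter> \<Union>G' = {}) \<and>
       \<Union>(\<Union>\<C>) = {..<v} \<and> E = \<Union>\<C>)"

text \<open>A (K_2, S(C_h))-URD(v; r, s): the edges of K_v are partitioned into r 1-factors
  F 0, ..., F (r-1) and s sun classes S 0, ..., S (s-1).\<close>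
definition URD :: "nat \<Rightarrow> nat \<Rightarrow> nat \<Rightarrow> nat \<Rightarrow> bool" where
  "URD h v r s \<longleftrightarrow> (\<exists>F S.
     (\<forall>i<r. one_factor v (F i)) \<and> (\<forall>j<s. sun_class h v (S j)) \<and>
     (let cls = (\<lambda>k. if k < r then F k else S (k - r)) in
        (\<forall>k<r+s. \<forall>l<r+s. k \<noteq> l \<longrightarrow> cls k \<inter> cls l = {}) \<and>
        (\<Union>k<r+s. cls k) = Kv_edges v))"

definition J :: "nat \<Rightarrow> nat \<Rightarrow> (nat \<times> nat) set" where
  "J h v = (if v mod (4*h) = 0 \<or> (v mod (4*h) = 2*h \<and> even h)
            then {(3 + 4*x, (v - 4) div 2 - 2*x) | x. x \<le> (v - 4) div 4}
            else {(1 + 4*x, (v - 2) div 2 - 2*x) | x. x \<le> (v - 2) div 4})"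

end

theory Submission
  imports Defs
begin

definition dg :: "nat set set \<Rightarrow> nat \<Rightarrow> nat" where "dg E x = card {e\<in>E. x\<in>e}"

lemma sun_union:
  assumes "G = sun_edges h a b" "h > 0"
  shows "\<Union>G = a ` {..<h} \<union> b ` {..<h}"
proof
  show "\<Union>G \<subseteq> a ` {..<h} \<union> b ` {..<h}"
    using assms by (auto simp: sun_edges_def)
  show "a ` {..<h} \<union> b ` {..<h} \<subseteq> \<Union>G"
    using assms by (auto simp: sun_edges_def)
qed

lemma pmod: "i < (h::nat) \<Longrightarrow> (i+h-1) mod h = (if i = 0 then h-1 else i-1)"
proof (cases "i = 0")
  case False assume "i < h"
  then have "i + h - 1 = (i - 1) + h" using False by simp
  then have "(i+h-1) mod h = ((i - 1) + h) mod h" by simp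
  also have "\<dots> = i - 1" using \<open>i<h\<close> by simp
  finally show ?thesis using False by simp
qed simp

lemma smod: "i < (h::nat) \<Longrightarrow> Suc i mod h = (if Suc i = h then 0 else Suc i)"
  by auto

lemma sun_deg_a:
  assumes h: "h \<ge> 3" and ia: "inj_on a {..<h}" and ib: "inj_on b {..<h}"
    and dj: "a ` {..<h} \<inter> b ` {..<h} = {}" and G: "G = sun_edges h a b" and i: "i < h"
  shows "dg G (a i) = 3"
proof -
  let ?p = "(i + h - 1) mod h"
  have p: "?p < h" using h by simp
  have si: "Suc i mod h < h" using h by simp
  have eq: "{e\<in>G. a i \<in> e} = {{a i, a (Suc i mod h)}, {a ?p, a i}, {a i, b i}}"
  proof (rule set_eqI, rule iffI)
    fix e assume "e \<in> {e\<in>G. a i \<in> e}"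
    then have eG: "e \<in> G" and ae: "a i \<in> e" by auto
    from eG G consider j where "j < h" "e = {a j, a (Suc j mod h)}" | j where "j < h" "e = {a j, b j}"
      unfolding sun_edges_def by blast
    then show "e \<in> {{a i, a (Suc i mod h)}, {a ?p, a i}, {a i, b i}}"
    proof cases
      case 1
      have sj: "Suc j mod h < h" using h by simp
      from ae 1 have "a i = a j \<or> a i = a (Suc j mod h)" by auto
      then have "i = j \<or> i = Suc j mod h" using ia i 1(1) sj by (meson inj_on_def lessThan_iff)
      then show ?thesis
      proof
        assume "i = j" then show ?thesis using 1 by simp
      next
        assume ij: "i = Suc j mod h"
        have "j = ?p"
        proof (cases "Suc j = h")
          case True then show ?thesis using ij h by simp
        next
          case False then have "Suc j < h" using 1 by simp
          then have "i = Suc j" using ij by simp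
          then show ?thesis using 1 h by simp
        qed
        then show ?thesis using 1 ij by auto
      qed
    next
      case 2
      from ae 2 have "a i = a j \<or> a i = b j" by auto
      moreover have "a i \<noteq> b j" using dj i 2(1) by auto
      ultimately have "i = j" using ia i 2(1) by (meson inj_on_def lessThan_iff)
      then show ?thesis using 2 by simp
    qed
  next
    fix e assume "e \<in> {{a i, a (Suc i mod h)}, {a ?p, a i}, {a i, b i}}"
    moreover have "{a i, a (Suc i mod h)} \<in> G" using G i unfolding sun_edges_def by blast
    moreover have "{a ?p, a (Suc ?p mod h)} \<in> G" using G p unfolding sun_edges_def by blast
    moreover have "Suc ?p mod h = i"
    proof (cases "i = 0")
      case True then show ?thesis using h pmod[OF i] by simp
    next
      case False then have "?p = i - 1" using pmod[OF i] by simp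
      then show ?thesis using False i by simp
    qed
    moreover have "{a i, b i} \<in> G" using G i unfolding sun_edges_def by blast
    ultimately show "e \<in> {e\<in>G. a i \<in> e}" by auto
  qed
  have n1: "a (Suc i mod h) \<noteq> a i"
  proof
    assume "a (Suc i mod h) = a i"
    then have "Suc i mod h = i" using ia si i by (meson inj_on_def lessThan_iff)
    then show False using h i by (simp add: smod split: if_splits)
  qed
  have n2: "a ?p \<noteq> a i"
  proof
    assume "a ?p = a i"
    then have "?p = i" using ia p i by (meson inj_on_def lessThan_iff)
    then show False using h i pmod[OF i] smod[OF i] by (simp split: if_splits)
  qed
  have n3: "a ?p \<noteq> a (Suc i mod h)"
  proof
    assume "a ?p = a (Suc i mod h)"
    then have "?p = Suc i mod h" using ia p si by (meson inj_on_def lessThan_iff)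
    then show False using h i pmod[OF i] smod[OF i] by (simp split: if_splits)
  qed
  have n4: "b i \<noteq> a j" if "j < h" for j using dj i that by auto
  have "card {{a i, a (Suc i mod h)}, {a ?p, a i}, {a i, b i}} = 3"
    using n1 n2 n3 n4[OF p] n4[OF si] n4[OF i] by (auto simp: doubleton_eq_iff card_insert_if)
  then show ?thesis unfolding dg_def eq .
qed

lemma sun_deg_b:
  assumes ib: "inj_on b {..<h}"
    and dj: "a ` {..<h} \<inter> b ` {..<h} = {}" and G: "G = sun_edges h a b" and i: "i < h"
  shows "dg G (b i) = 1"
proof -
  have "{e\<in>G. b i \<in> e} = {{a i, b i}}"
  proof (rule set_eqI, rule iffI)
    fix e assume "e \<in> {e\<in>G. b i \<in> e}"
    then have eG: "e \<in> G" and be: "b i \<in> e" by auto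
    from eG G consider j where "j < h" "e = {a j, a (Suc j mod h)}" | j where "j < h" "e = {a j, b j}"
      unfolding sun_edges_def by blast
    then show "e \<in> {{a i, b i}}"
    proof cases
      case 1
      have "Suc j mod h < h" using 1 by simp
      have "b i = a j \<or> b i = a (Suc j mod h)" using 1(2) be by blast
      then have "b i \<in> a ` {..<h}" using 1(1) \<open>Suc j mod h < h\<close> by blast
      moreover have "b i \<in> b ` {..<h}" using i by blast
      ultimately show ?thesis using dj by blast
    next
      case 2
      from be 2 have "b i = a j \<or> b i = b j" by auto
      moreover have "a j \<noteq> b i" using dj i 2(1) by auto
      ultimately have "b i = b j" by metis
      then have "i = j" using inj_onD[OF ib] i 2(1) by simp
      then show ?thesis using 2 by simp
    qed
  next
    fix e assume "e \<in> {{a i, b i}}"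
    then have "e = {a i, b i}" by simp
    moreover have "{a i, b i} \<in> G" using G i unfolding sun_edges_def by blast
    ultimately show "e \<in> {e\<in>G. b i \<in> e}" by simp
  qed
  then show ?thesis unfolding dg_def by simp
qed

lemma class_deg:
  assumes h: "h \<ge> 3" and sc: "sun_class h v E"
  shows "\<exists>A. A \<subseteq> {..<v} \<and> 2 * card A = v \<and> (\<forall>x<v. dg E x = (if x \<in> A then 3 else 1))"
proof -
  obtain C where C1: "\<forall>G\<in>C. is_sun h G" and C2: "\<forall>G\<in>C. \<forall>G'\<in>C. G \<noteq> G' \<longrightarrow> \<Union>G \<inter> \<Union>G' = {}"
    and C3: "\<Union>(\<Union>C) = {..<v}" and C4: "E = \<Union>C"
    using sc unfolding sun_class_def by blast
  have dgloc: "dg E x = dg G x" if G: "G \<in> C" and x: "x \<in> \<Union>G" for G x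
  proof -
    have "{e\<in>E. x\<in>e} = {e\<in>G. x\<in>e}"
    proof (rule set_eqI, rule iffI)
      fix e assume "e \<in> {e\<in>E. x\<in>e}"
      then obtain G' where G': "G' \<in> C" "e \<in> G'" "x \<in> e" using C4 by auto
      then have "x \<in> \<Union>G'" by auto
      then have "G' = G" using C2 G G' x by blast
      then show "e \<in> {e\<in>G. x\<in>e}" using G' by auto
    qed (use G C4 in auto)
    then show ?thesis unfolding dg_def by simp
  qed
  define A where "A = {x. x < v \<and> dg E x = 3}"
  define B where "B = {..<v} - A"
  have per: "card (A \<inter> \<Union>G) = h \<and> card (B \<inter> \<Union>G) = h \<and> (\<forall>x\<in>\<Union>G. dg E x = 3 \<or> dg E x = 1)"
    if G: "G \<in> C" for G
  proof -
    obtain a b where ia: "inj_on a {..<h}" and ib: "inj_on b {..<h}" and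
      dj: "a ` {..<h} \<inter> b ` {..<h} = {}" and Gs: "G = sun_edges h a b"
      using C1 G unfolding is_sun_def by blast
    have UG: "\<Union>G = a ` {..<h} \<union> b ` {..<h}" using sun_union[OF Gs] h by simp
    have UGv: "\<Union>G \<subseteq> {..<v}" using C3 G by blast
    have da: "dg E (a i) = 3" if "i < h" for i
      using dgloc[OF G] sun_deg_a[OF h ia ib dj Gs that] UG that by auto
    have db: "dg E (b i) = 1" if "i < h" for i
      using dgloc[OF G] sun_deg_b[OF ib dj Gs that] UG that by auto
    have eA: "A \<inter> \<Union>G = a ` {..<h}"
    proof
      show "A \<inter> \<Union>G \<subseteq> a ` {..<h}" using UG db unfolding A_def by auto
      show "a ` {..<h} \<subseteq> A \<inter> \<Union>G" using UG UGv da unfolding A_def by auto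
    qed
    have eB: "B \<inter> \<Union>G = b ` {..<h}"
    proof
      show "B \<inter> \<Union>G \<subseteq> b ` {..<h}" using UG da unfolding A_def B_def by auto
      show "b ` {..<h} \<subseteq> B \<inter> \<Union>G" using UG UGv db unfolding A_def B_def by auto
    qed
    show ?thesis using eA eB card_image[OF ia] card_image[OF ib] UG da db by auto
  qed
  have deg13: "dg E x = 3 \<or> dg E x = 1" if "x < v" for x
    using per C3 that by blast
  have finC: "finite C"
  proof (rule finite_subset)
    show "C \<subseteq> Pow (Pow {..<v})" using C3 by blast
  qed simp
  have Aeq: "A = (\<Union>G\<in>C. A \<inter> \<Union>G)" using C3 unfolding A_def by blast
  have Beq: "B = (\<Union>G\<in>C. B \<inter> \<Union>G)" using C3 unfolding B_def by blast
  have cA: "card A = (\<Sum>G\<in>C. card (A \<inter> \<Union>G))"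
    apply (subst Aeq)
    apply (rule card_UN_disjoint[OF finC])
    subgoal using C3 by (auto simp: A_def intro: finite_subset[of _ "{..<v}"])
    subgoal using C2 by blast
    done
  have cB: "card B = (\<Sum>G\<in>C. card (B \<inter> \<Union>G))"
    apply (subst Beq)
    apply (rule card_UN_disjoint[OF finC])
    subgoal using C3 by (auto simp: B_def intro: finite_subset[of _ "{..<v}"])
    subgoal using C2 by blast
    done
  have "card A = card B" unfolding cA cB by (rule sum.cong) (use per in auto)
  moreover have "card B = v - card A" unfolding B_def
    by (subst card_Diff_subset) (auto simp: A_def)
  moreover have "card A \<le> v" using card_mono[of "{..<v}" A] by (auto simp: A_def)
  ultimately have "2 * card A = v" by simp
  moreover have "\<forall>x<v. dg E x = (if x \<in> A then 3 else 1)"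
    using deg13 unfolding A_def by auto
  moreover have "A \<subseteq> {..<v}" unfolding A_def by auto
  ultimately show ?thesis by blast
qed

lemma ind_sum: "(\<Sum>x<(v::nat). if x \<in> B then 1 else 0::nat) = card ({..<v} \<inter> B)"
proof -
  have "sum (\<lambda>_. 1::nat) ({..<v} \<inter> B) = (\<Sum>x<v. if x \<in> B then 1 else 0::nat)"
    by (rule sum.inter_restrict) simp
  then show ?thesis by simp
qed

lemma sum_split: "sum (f::nat\<Rightarrow>nat) {..<r+s} = sum f {..<r} + (\<Sum>j<s. f (r+j))"
  by (induction s) auto

lemma Kv_fin: "finite (Kv_edges v)"
proof (rule finite_subset)
  show "Kv_edges v \<subseteq> Pow {..<v}" unfolding Kv_edges_def by auto
qed simp

lemma Kv_deg: assumes x: "x < v" shows "dg (Kv_edges v) x = v - 1"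
proof -
  have "{e\<in>Kv_edges v. x\<in>e} = (\<lambda>y. {x, y}) ` ({..<v} - {x})"
  proof (rule set_eqI, rule iffI)
    fix e assume "e \<in> {e\<in>Kv_edges v. x\<in>e}"
    then obtain p q where e: "e = {p, q}" "p < v" "q < v" "p \<noteq> q" and xe: "x \<in> e"
      unfolding Kv_edges_def by blast
    show "e \<in> (\<lambda>y. {x, y}) ` ({..<v} - {x})"
    proof (cases "x = p")
      case True
      then have "e = {x, q}" "q \<in> {..<v} - {x}" using e by auto
      then show ?thesis by blast
    next
      case False
      then have "x = q" using xe e by blast
      then have "e = {x, p}" "p \<in> {..<v} - {x}" using e by auto
      then show ?thesis by blast
    qed
  next
    fix e assume "e \<in> (\<lambda>y. {x, y}) ` ({..<v} - {x})"
    then obtain y where y: "y < v" "y \<noteq> x" "e = {x, y}" by blast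
    then have "e \<in> Kv_edges v" unfolding Kv_edges_def using x by blast
    then show "e \<in> {e\<in>Kv_edges v. x\<in>e}" using y by blast
  qed
  moreover have "inj_on (\<lambda>y. {x, y}) ({..<v} - {x})"
    by (rule inj_onI) (auto simp: doubleton_eq_iff)
  ultimately have "dg (Kv_edges v) x = card ({..<v} - {x})" unfolding dg_def by (simp add: card_image)
  then show ?thesis using x by simp
qed

lemma of_deg: assumes "one_factor v M" "x < v" shows "dg M x = 1"
proof -
  from assms have "\<exists>!e. e \<in> M \<and> x \<in> e" unfolding one_factor_def by blast
  then obtain e where e: "e \<in> M \<and> x \<in> e" and u: "\<forall>e'. e' \<in> M \<and> x \<in> e' \<longrightarrow> e' = e"
    by (auto elim!: ex1E)
  then have "{e\<in>M. x\<in>e} = {e}" by blast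
  then show ?thesis unfolding dg_def by simp
qed

lemma count_rel:
  assumes h: "h \<ge> 3" and v: "v > 0" and U: "URD h v r s"
  shows "v - 1 = r + 2 * s \<and> even s"
proof -
  obtain F S where F: "\<forall>i<r. one_factor v (F i)" and S: "\<forall>j<s. sun_class h v (S j)"
    and L: "let cls = (\<lambda>k. if k < r then F k else S (k - r)) in
        (\<forall>k<r+s. \<forall>l<r+s. k \<noteq> l \<longrightarrow> cls k \<inter> cls l = {}) \<and>
        (\<Union>k<r+s. cls k) = Kv_edges v"
    using U unfolding URD_def by (elim exE conjE) (rule that; assumption)
  define cls where "cls = (\<lambda>k. if k < r then F k else S (k - r))"
  have L': "(\<forall>k<r+s. \<forall>l<r+s. k \<noteq> l \<longrightarrow> cls k \<inter> cls l = {}) \<and> (\<Union>k<r+s. cls k) = Kv_edges v"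
    using L unfolding cls_def Let_def .
  have D': "\<forall>k<r+s. \<forall>l<r+s. k \<noteq> l \<longrightarrow> cls k \<inter> cls l = {}" using L' by (rule conjunct1)
  have Un': "(\<Union>k<r+s. cls k) = Kv_edges v" using L' by (rule conjunct2)
  define P where "P j A \<longleftrightarrow> A \<subseteq> {..<v} \<and> 2 * card A = v \<and> (\<forall>x<v. dg (S j) x = (if x \<in> A then 3 else 1))" for j A
  have ex: "\<forall>j\<in>{..<s}. \<exists>A. P j A"
  proof
    fix j assume "j \<in> {..<s}"
    then have "sun_class h v (S j)" using S by simp
    from class_deg[OF h this] show "\<exists>A. P j A" unfolding P_def .
  qed
  obtain Af where Af0: "\<forall>j\<in>{..<s}. P j (Af j)" using bchoice[OF ex] by blast
  have Af: "Af j \<subseteq> {..<v} \<and> 2 * card (Af j) = v \<and> (\<forall>x<v. dg (S j) x = (if x \<in> Af j then 3 else 1))"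
    if "j < s" for j using Af0 that unfolding P_def by simp
  have cardAf: "\<And>j. j<s \<Longrightarrow> 2*card (Af j) = v" using Af by blast
  have subAf: "\<And>j. j<s \<Longrightarrow> {..<v} \<inter> Af j = Af j" using Af by blast
  have dgS: "\<And>j x. j<s \<Longrightarrow> x<v \<Longrightarrow> dg (S j) x = (if x\<in>Af j then 3 else 1)" using Af by blast
  define c where "c x = (\<Sum>j<s. if x \<in> Af j then 1 else 0::nat)" for x
  have deg: "v - 1 = r + s + 2 * c x" if x: "x < v" for x
  proof -
    have "{e\<in>Kv_edges v. x\<in>e} = (\<Union>k<r+s. {e\<in>cls k. x\<in>e})" using Un' by auto
    then have "dg (Kv_edges v) x = card (\<Union>k<r+s. {e\<in>cls k. x\<in>e})" unfolding dg_def by simp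
    also have "\<dots> = (\<Sum>k<r+s. dg (cls k) x)" unfolding dg_def
    proof (rule card_UN_disjoint)
      show "\<forall>i\<in>{..<r+s}. finite {e\<in>cls i. x\<in>e}"
      proof
        fix i assume i: "i \<in> {..<r+s}"
        have "{e\<in>cls i. x\<in>e} \<subseteq> Kv_edges v" using Un' i by blast
        then show "finite {e\<in>cls i. x\<in>e}" using finite_subset Kv_fin by blast
      qed
      show "\<forall>i\<in>{..<r+s}. \<forall>j\<in>{..<r+s}. i \<noteq> j \<longrightarrow> {e\<in>cls i. x\<in>e} \<inter> {e\<in>cls j. x\<in>e} = {}"
        using D' by blast
    qed simp
    also have "\<dots> = (\<Sum>k<r. dg (cls k) x) + (\<Sum>j<s. dg (cls (r+j)) x)" by (rule sum_split)
    also have "(\<Sum>k<r. dg (cls k) x) = (\<Sum>k<r. 1)"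
      by (rule sum.cong) (use F of_deg x in \<open>auto simp: cls_def\<close>)
    also have "(\<Sum>k<r. 1::nat) = r" by simp
    also have "(\<Sum>j<s. dg (cls (r+j)) x) = (\<Sum>j<s. 1 + 2 * (if x \<in> Af j then 1 else 0))"
      by (rule sum.cong) (simp_all add: cls_def dgS x)
    also have "\<dots> = (\<Sum>j<s. 1) + (\<Sum>j<s. 2 * (if x \<in> Af j then 1 else 0::nat))"
      by (rule sum.distrib)
    also have "\<dots> = s + 2 * c x" unfolding c_def by (simp only: sum_distrib_left[symmetric]) simp
    finally show ?thesis using Kv_deg[OF x] by simp
  qed
  have "(\<Sum>x<v. c x) = (\<Sum>j<s. \<Sum>x<v. if x \<in> Af j then 1 else 0::nat)"
    unfolding c_def by (rule sum.swap)
  also have "\<dots> = (\<Sum>j<s. card (Af j))"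
    by (rule sum.cong) (simp_all add: ind_sum subAf)
  finally have sc1: "(\<Sum>x<v. c x) = (\<Sum>j<s. card (Af j))" .
  have "2 * (\<Sum>j<s. card (Af j)) = (\<Sum>j<s. 2 * card (Af j))"
    by (rule sum_distrib_left)
  also have "\<dots> = (\<Sum>j<s. v)" by (rule sum.cong) (simp_all add: cardAf)
  also have "\<dots> = s * v" by simp
  finally have "2 * (\<Sum>x<v. c x) = s * v" using sc1 by simp
  then have sc: "2 * (\<Sum>x<v. c x) = s * v" .
  have "(\<Sum>x<v. v - 1) = (\<Sum>x<v. r + s + 2 * c x)" using deg by (intro sum.cong) auto
  moreover have "(\<Sum>x<v. v - 1) = v * (v - 1)" by simp
  moreover have "(\<Sum>x<v. r + s + 2 * c x) = (\<Sum>x<v. r + s) + (\<Sum>x<v. 2 * c x)"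
    by (rule sum.distrib)
  moreover have "(\<Sum>x<v. 2 * c x) = 2 * (\<Sum>x<v. c x)" by (rule sum_distrib_left[symmetric])
  moreover have "(\<Sum>x<v. r + s) = v * (r + s)" by simp
  moreover have "v * (r + 2 * s) = v * (r + s) + s * v" by (simp add: algebra_simps)
  ultimately have "v * (v - 1) = v * (r + 2 * s)" using sc by linarith
  then have e1: "v - 1 = r + 2 * s" using v by simp
  have "v - 1 = r + s + 2 * c 0" using deg v by simp
  then have "s = 2 * c 0" using e1 by simp
  then show ?thesis using e1 by simp
qed

theorem lemma2p2:
  fixes h v r s :: nat
  assumes "h \<ge> 3" and "v > 0" and "v mod (2*h) = 0"
    and "URD h v r s"
  shows "(r, s) \<in> J h v"
proof -
  obtain t where s: "s = 2 * t" and e: "v - 1 = r + 4 * t"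
    using count_rel[OF assms(1,2,4)] by auto
  obtain k where k: "v = 2 * h * k" using assms(3) by auto
  show ?thesis
  proof (cases "v mod (4*h) = 0 \<or> (v mod (4*h) = 2*h \<and> even h)")
    case True
    have "4 dvd v"
    proof (cases "v mod (4*h) = 0")
      case True
      then have "4*h dvd v" by (simp add: dvd_eq_mod_eq_0)
      then show ?thesis using dvd_trans[of 4 "4*h" v] by simp
    next
      case False
      then have m: "v mod (4*h) = 2*h" and he: "even h" using \<open>v mod (4*h) = 0 \<or> _\<close> by auto
      have "v = 4*h*(v div (4*h)) + 2*h" using m div_mult_mod_eq[of v "4*h"] by (simp add: mult.commute)
      moreover obtain m where "h = 2*m" using he by blast
      ultimately have "v = 4*(h*(v div (4*h)) + m)" by simp
      then show ?thesis by (metis dvd_triv_left)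
    qed
    then obtain w where w: "v = 4 * w" by auto
    have "(r, s) = (3 + 4*(w - 1 - t), (v - 4) div 2 - 2*(w - 1 - t)) \<and> w - 1 - t \<le> (v - 4) div 4"
      using w e s assms(2) by auto
    then show ?thesis using True unfolding J_def by auto
  next
    case False
    have "odd k"
    proof
      assume "even k" then obtain q where "k = 2*q" by auto
      then have "v = 4*h*q" using k by simp
      then show False using False by simp
    qed
    then obtain q where q: "k = 2*q+1" using oddE by blast
    have "odd h"
    proof
      assume "even h"
      have "v = 2*h + 4*h*q" using k q by (simp add: algebra_simps)
      then have "v mod (4*h) = 2*h" using assms(1) by simp
      then show False using False \<open>even h\<close> by simp
    qed
    then obtain m where m: "h = 2*m+1" using oddE by blast
    have "v = 4 * (m * k + q) + 2" using k q m by (simp add: algebra_simps)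
    then obtain w where w: "v = 4 * w + 2" by blast
    have "(r, s) = (1 + 4*(w - t), (v - 2) div 2 - 2*(w - t)) \<and> w - t \<le> (v - 2) div 4"
      using w e s by auto
    then show ?thesis using False unfolding J_def by auto
  qed
qed

end
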